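(* Let $V$ be an Archimedean linear lattice and let $(\mathcal{R}, S, V)$ be a $V$-complete vector $S$-metric space. Let $p, k:\mathcal{R}\to\mathcal{R}$ be maps satisfying: (i) for all $\xi,\gamma\in\mathcal{R}$, $$S(p\xi,p\xi,p\gamma)\preceq h_1 S(k\xi,k\xi,k\gamma)+h_2 S(p\xi,p\xi,k\xi)+h_3 S(p\gamma,p\gamma,k\gamma)+h_4 S(p\xi,p\xi,k\gamma)+h_5 S(p\gamma,p\gamma,k\xi),$$ where $h_1,\dots,h_5$ are positive real constants with $2h_1+2h_2+2h_3+4h_4+4h_5<1$; (ii) $p(\mathcal{R})\subset k(\mathcal{R})$; (iii) one of $p(\mathcal{R})$ or $k(\mathcal{R})$ is a $V$-complete subspace of $\mathcal{R}$. Then $\{p,k\}$ has a unique point of coincidence in $\mathcal{R}$. If moreover $\{p,k\}$ is weakly compatible, then $p$ and $k$ have a unique common fixed point in $\mathcal{R}$.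
   Context: An ordered linear space is a real vector space $V$ with a partial order $\preceq$ such that $x\preceq y$ implies $x+z\preceq y+z$ and $\omega x\preceq \omega y$ for all $z\in V$, $\omega>0$. A linear lattice (Riesz space) is an ordered linear space in which every two-element set has a supremum and an infimum. Write $V^+=\{x\in V: x\succeq 0\}$; for a sequence $\langle\mu_n\rangle$ in $V$, $\mu_n\downarrow 0$ means $\mu_n$ is decreasing with infimum $0$. $V$ is Archimedean if $\frac1n x\downarrow 0$ for every $x\in V^+$. A vector $S$-metric on a nonempty set $\mathcal{R}$ is a map $S:\mathcal{R}\times\mathcal{R}\times\mathcal{R}\to V$ such that for all $x,y,z,a\in\mathcal{R}$: (a) $S(x,y,z)\succeq 0$; (b) $S(x,y,z)=0$ iff $x=y=z$; (c) $S(x,y,z)\preceq S(x,x,a)+S(y,y,a)+S(z,z,a)$. Then $(\mathcal{R},S,V)$ is a vector $S$-metric space. A sequence $\langle x_n\rangle$ in $\mathcal{R}$ $V$-converges to $x\in\mathcal{R}$ if there is a sequence $\mu_n\downarrow 0$ in $V$ with $S(x_n,x_n,x)\preceq \mu_n$ for all $n$; it is $V$-Cauchy if there is $\mu_n\downarrow0$ in $V$ with $S(x_n,x_n,x_{n+q})\preceq\mu_n$ for all $n,q$. The space (or a subset) is $V$-complete if every $V$-Cauchy sequence in it $V$-converges to a limit in it. For maps $f,g:\mathcal{R}\to\mathcal{R}$, a point $x$ with $fx=gx=y$ is a coincidence point and $y$ is a point of coincidence of $f$ and $g$; $f,g$ are weakly compatible if $fgx=gfx$ whenever $fx=gx$.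 A common fixed point of $f$ and $g$ is a point $x$ with $fx=gx=x$. *)

theory Defs
  imports Complex_Main
begin

text \<open>A linear lattice (Riesz space) is modelled as a type of class
  ordered_real_vector (ordered linear space) that is also a lattice
  (inf/sup w.r.t. the same order).\<close>

definition dec_to_zero :: "(nat \<Rightarrow> 'v::{ordered_real_vector,lattice}) \<Rightarrow> bool" where
  "dec_to_zero \<mu> \<longleftrightarrow> (\<forall>n. \<mu> (Suc n) \<le> \<mu> n) \<and> (\<forall>n. 0 \<le> \<mu> n)
     \<and> (\<forall>b. (\<forall>n. b \<le> \<mu> n) \<longrightarrow> b \<le> 0)"

definition archimedean_V :: "'v::{ordered_real_vector,lattice} itself \<Rightarrow> bool" where
  "archimedean_V _ \<longleftrightarrow> (\<forall>x::'v. 0 \<le> x \<longrightarrow> dec_to_zero (\<lambda>n. (1 / real (Suc n)) *\<^sub>R x))"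

definition vector_S_metric :: "('a \<Rightarrow> 'a \<Rightarrow> 'a \<Rightarrow> 'v::{ordered_real_vector,lattice}) \<Rightarrow> bool" where
  "vector_S_metric S \<longleftrightarrow>
     (\<forall>x y z. 0 \<le> S x y z) \<and>
     (\<forall>x y z. S x y z = 0 \<longleftrightarrow> (x = y \<and> y = z)) \<and>
     (\<forall>x y z a. S x y z \<le> S x x a + S y y a + S z z a)"

definition V_converges :: "('a \<Rightarrow> 'a \<Rightarrow> 'a \<Rightarrow> 'v::{ordered_real_vector,lattice}) \<Rightarrow> (nat \<Rightarrow> 'a) \<Rightarrow> 'a \<Rightarrow> bool" where
  "V_converges S x l \<longleftrightarrow> (\<exists>\<mu>. dec_to_zero \<mu> \<and> (\<forall>n. S (x n) (x n) l \<le> \<mu> n))"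

definition V_Cauchy :: "('a \<Rightarrow> 'a \<Rightarrow> 'a \<Rightarrow> 'v::{ordered_real_vector,lattice}) \<Rightarrow> (nat \<Rightarrow> 'a) \<Rightarrow> bool" where
  "V_Cauchy S x \<longleftrightarrow> (\<exists>\<mu>. dec_to_zero \<mu> \<and> (\<forall>n q. S (x n) (x n) (x (n + q)) \<le> \<mu> n))"

definition V_complete_on :: "('a \<Rightarrow> 'a \<Rightarrow> 'a \<Rightarrow> 'v::{ordered_real_vector,lattice}) \<Rightarrow> 'a set \<Rightarrow> bool" where
  "V_complete_on S A \<longleftrightarrow>
     (\<forall>x. (\<forall>n. x n \<in> A) \<longrightarrow> V_Cauchy S x \<longrightarrow> (\<exists>l\<in>A. V_converges S x l))"

definition point_of_coincidence :: "('a \<Rightarrow> 'a) \<Rightarrow> ('a \<Rightarrow> 'a) \<Rightarrow> 'a \<Rightarrow> bool" where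
  "point_of_coincidence f g y \<longleftrightarrow> (\<exists>x. f x = y \<and> g x = y)"

definition weakly_compatible :: "('a \<Rightarrow> 'a) \<Rightarrow> ('a \<Rightarrow> 'a) \<Rightarrow> bool" where
  "weakly_compatible f g \<longleftrightarrow> (\<forall>x. f x = g x \<longrightarrow> f (g x) = g (f x))"

end

theory Submission
  imports Defs
begin

lemma Ssym:
  fixes S :: "'a \<Rightarrow> 'a \<Rightarrow> 'a \<Rightarrow> 'v::{ordered_real_vector,lattice}"
  assumes "vector_S_metric S" shows "S x x y = S y y x"
proof -
  have a: "S u u w \<le> S w w u" for u w
  proof -
    have "S u u w \<le> S u u u + S u u u + S w w u" using assms unfolding vector_S_metric_def by blast
    moreover have "S u u u = 0" using assms unfolding vector_S_metric_def by blast
    ultimately show ?thesis by simp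
  qed
  show ?thesis using a[of x y] a[of y x] by (rule antisym)
qed

lemma Stri:
  fixes S :: "'a \<Rightarrow> 'a \<Rightarrow> 'a \<Rightarrow> 'v::{ordered_real_vector,lattice}"
  assumes "vector_S_metric S" shows "S x x z \<le> 2 *\<^sub>R S x x y + S y y z"
proof -
  have "S x x z \<le> S x x y + S x x y + S z z y" using assms unfolding vector_S_metric_def by blast
  thus ?thesis using Ssym[OF assms, of z y] by (simp add: scaleR_2)
qed

lemma Snonneg:
  fixes S :: "'a \<Rightarrow> 'a \<Rightarrow> 'a \<Rightarrow> 'v::{ordered_real_vector,lattice}"
  assumes "vector_S_metric S" shows "0 \<le> S x y z"
  using assms unfolding vector_S_metric_def by blast

lemma Szero:
  fixes S :: "'a \<Rightarrow> 'a \<Rightarrow> 'a \<Rightarrow> 'v::{ordered_real_vector,lattice}"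
  assumes "vector_S_metric S" shows "S x x z = 0 \<longleftrightarrow> x = z"
  using assms unfolding vector_S_metric_def by blast

lemma absorb:
  fixes A W :: "'v::ordered_real_vector"
  assumes "A \<le> a *\<^sub>R A + W" "a < 1"
  shows "A \<le> (1/(1-a)) *\<^sub>R W"
proof -
  have "A - a *\<^sub>R A \<le> W" using assms(1) by (simp add: algebra_simps)
  hence "(1-a) *\<^sub>R A \<le> W" by (simp add: algebra_simps)
  hence "(1/(1-a)) *\<^sub>R ((1-a) *\<^sub>R A) \<le> (1/(1-a)) *\<^sub>R W"
    using assms(2) by (intro scaleR_left_mono) auto
  thus ?thesis using assms(2) by simp
qed

lemma dec_scaled:
  fixes v :: "'v::{ordered_real_vector,lattice}"
  assumes arch: "archimedean_V TYPE('v)" and v: "0 \<le> v"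
    and dec: "\<And>n. a (Suc n) \<le> a n" and nn: "\<And>n. 0 \<le> a n"
    and small: "\<And>e. e > 0 \<Longrightarrow> \<exists>n. a n < e"
  shows "dec_to_zero (\<lambda>n. a n *\<^sub>R v)"
  unfolding dec_to_zero_def
proof (intro conjI allI impI)
  fix n show "a (Suc n) *\<^sub>R v \<le> a n *\<^sub>R v" using dec v by (rule scaleR_right_mono)
next
  fix n show "0 \<le> a n *\<^sub>R v" using nn v by (rule scaleR_nonneg_nonneg)
next
  fix b assume b: "\<forall>n. b \<le> a n *\<^sub>R v"
  have "b \<le> (1 / real (Suc m)) *\<^sub>R v" for m
  proof -
    obtain n where "a n < 1 / real (Suc m)" using small[of "1 / real (Suc m)"] by auto
    hence "a n *\<^sub>R v \<le> (1 / real (Suc m)) *\<^sub>R v" using v by (intro scaleR_right_mono) auto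
    thus ?thesis using b order_trans by blast
  qed
  moreover have "dec_to_zero (\<lambda>n. (1 / real (Suc n)) *\<^sub>R v)"
    using arch v unfolding archimedean_V_def by blast
  ultimately show "b \<le> 0" unfolding dec_to_zero_def by blast
qed

lemma below_dec:
  fixes v :: "'v::{ordered_real_vector,lattice}"
  assumes "dec_to_zero \<mu>" "c > 0" "\<And>n. v \<le> c *\<^sub>R \<mu> n"
  shows "v \<le> 0"
proof -
  have "(1/c) *\<^sub>R v \<le> \<mu> n" for n
  proof -
    have "(1/c) *\<^sub>R v \<le> (1/c) *\<^sub>R (c *\<^sub>R \<mu> n)" using assms(2,3) by (intro scaleR_left_mono) auto
    thus ?thesis using assms(2) by simp
  qed
  hence "(1/c) *\<^sub>R v \<le> 0" using assms(1) unfolding dec_to_zero_def by blast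
  hence "c *\<^sub>R ((1/c) *\<^sub>R v) \<le> c *\<^sub>R 0" using assms(2) by (intro scaleR_left_mono) auto
  thus ?thesis using assms(2) by simp
qed

theorem corollary3p2:
  fixes S :: "'a \<Rightarrow> 'a \<Rightarrow> 'a \<Rightarrow> 'v::{ordered_real_vector,lattice}"
    and p k :: "'a \<Rightarrow> 'a"
    and h1 h2 h3 h4 h5 :: real
  assumes arch: "archimedean_V TYPE('v)"
    and Smet: "vector_S_metric S"
    and complete: "V_complete_on S UNIV"
    and hpos: "h1 > 0" "h2 > 0" "h3 > 0" "h4 > 0" "h5 > 0"
    and hsum: "2*h1 + 2*h2 + 2*h3 + 4*h4 + 4*h5 < 1"
    and contr: "\<And>\<xi> \<gamma>. S (p \<xi>) (p \<xi>) (p \<gamma>) \<le>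
        h1 *\<^sub>R S (k \<xi>) (k \<xi>) (k \<gamma>) + h2 *\<^sub>R S (p \<xi>) (p \<xi>) (k \<xi>)
      + h3 *\<^sub>R S (p \<gamma>) (p \<gamma>) (k \<gamma>) + h4 *\<^sub>R S (p \<xi>) (p \<xi>) (k \<gamma>)
      + h5 *\<^sub>R S (p \<gamma>) (p \<gamma>) (k \<xi>)"
    and range_sub: "range p \<subseteq> range k"
    and sub_complete: "V_complete_on S (range p) \<or> V_complete_on S (range k)"
  shows "(\<exists>!y. point_of_coincidence p k y) \<and>
         (weakly_compatible p k \<longrightarrow> (\<exists>!x. p x = x \<and> k x = x))"
proof -
  note sym = Ssym[OF Smet] and tri = Stri[OF Smet] and nn = Snonneg[OF Smet] and zero = Szero[OF Smet]
  have z0: "\<And>w. S w w w = 0" using zero by simp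
  have uniq: "p a = p b" if "p a = k a" "p b = k b" for a b
  proof -
    let ?D = "S (p a) (p a) (p b)"
    have "?D \<le> h1 *\<^sub>R ?D + h2 *\<^sub>R 0 + h3 *\<^sub>R 0 + h4 *\<^sub>R ?D + h5 *\<^sub>R ?D"
      using contr[of a b] unfolding that(1)[symmetric] that(2)[symmetric] z0 sym[of "p b" "p a"] .
    hence "?D \<le> (h1+h4+h5) *\<^sub>R ?D + 0" by (simp add: algebra_simps)
    hence "?D \<le> (1/(1-(h1+h4+h5))) *\<^sub>R 0" using hsum hpos by (intro absorb) auto
    hence "?D = 0" using nn[of "p a" "p a" "p b"] by simp
    thus ?thesis using zero by simp
  qed
  have "\<forall>z. \<exists>w. k w = p z"
  proof
    fix z have "p z \<in> range k" using range_sub by blast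
    thus "\<exists>w. k w = p z" by (auto simp: image_iff)
  qed
  then obtain g where g: "\<And>z. k (g z) = p z" using choice[of "\<lambda>z w. k w = p z"] by blast
  obtain x0 :: 'a where True by simp
  define x where "x n = (g ^^ n) x0" for n
  have kx: "k (x (Suc n)) = p (x n)" for n by (simp add: x_def g)
  define y where "y n = p (x n)" for n
  define d where "d n = S (y (Suc n)) (y (Suc n)) (y n)" for n
  define r where "r = (h1+h3+h4) / (1-(h2+2*h4))"
  have r0: "0 \<le> r" "r < 1" using hpos hsum by (auto simp: r_def field_simps)
  have dstep: "d (Suc n) \<le> r *\<^sub>R d n" for n
  proof -
    have c: "d (Suc n) \<le> h1 *\<^sub>R d n + h2 *\<^sub>R d (Suc n) + h3 *\<^sub>R d n
       + h4 *\<^sub>R S (y (Suc (Suc n))) (y (Suc (Suc n))) (y n) + h5 *\<^sub>R 0"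
      using contr[of "x (Suc (Suc n))" "x (Suc n)"]
      unfolding d_def y_def kx z0 .
    have t: "S (y (Suc (Suc n))) (y (Suc (Suc n))) (y n) \<le> 2 *\<^sub>R d (Suc n) + d n"
      using tri[of "y (Suc (Suc n))" "y n" "y (Suc n)"] sym[of "y n" "y (Suc n)"] unfolding d_def by simp
    have "d (Suc n) \<le> h1 *\<^sub>R d n + h2 *\<^sub>R d (Suc n) + h3 *\<^sub>R d n
       + h4 *\<^sub>R (2 *\<^sub>R d (Suc n) + d n)"
      using c add_left_mono[OF scaleR_left_mono[OF t, of h4]] hpos by (auto elim: order_trans)
    hence "d (Suc n) \<le> (h2+2*h4) *\<^sub>R d (Suc n) + (h1+h3+h4) *\<^sub>R d n"
      by (simp add: algebra_simps)
    hence "d (Suc n) \<le> (1/(1-(h2+2*h4))) *\<^sub>R ((h1+h3+h4) *\<^sub>R d n)"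
      using hpos hsum by (intro absorb) auto
    thus ?thesis by (simp add: r_def)
  qed
  have dpow: "d n \<le> (r^n) *\<^sub>R d 0" for n
  proof (induction n)
    case 0 then show ?case by simp
  next
    case (Suc n)
    have "r *\<^sub>R d n \<le> r *\<^sub>R ((r^n) *\<^sub>R d 0)" using Suc r0 by (intro scaleR_left_mono) auto
    then show ?case using dstep[of n] by (auto elim: order_trans simp: mult.commute)
  qed
  have d0: "0 \<le> d 0" unfolding d_def by (rule nn)
  have cau: "S (y n) (y n) (y (n+q)) \<le> (2 * (\<Sum>i<q. r^(n+i))) *\<^sub>R d 0" for n q
  proof (induction q arbitrary: n)
    case 0 then show ?case using z0 by simp
  next
    case (Suc q)
    have "S (y n) (y n) (y (n + Suc q)) \<le> 2 *\<^sub>R S (y n) (y n) (y (Suc n)) + S (y (Suc n)) (y (Suc n)) (y (Suc n + q))"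
      using tri[of "y n" "y (n + Suc q)" "y (Suc n)"] by simp
    also have "S (y n) (y n) (y (Suc n)) = d n" unfolding d_def by (rule sym)
    also have "2 *\<^sub>R d n + S (y (Suc n)) (y (Suc n)) (y (Suc n + q))
       \<le> 2 *\<^sub>R ((r^n) *\<^sub>R d 0) + (2 * (\<Sum>i<q. r^(Suc n+i))) *\<^sub>R d 0"
      by (intro add_mono scaleR_left_mono dpow Suc.IH) auto
    also have "\<dots> = (2 * (\<Sum>i<Suc q. r^(n+i))) *\<^sub>R d 0"
      by (simp add: sum.lessThan_Suc_shift algebra_simps del: sum.lessThan_Suc)
    finally show ?case .
  qed
  define a where "a n = 2 * r^n / (1-r)" for n
  have sumb: "(\<Sum>i<q. r^(n+i)) \<le> r^n / (1-r)" for n q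
  proof -
    have "(\<Sum>i<q. r^(n+i)) = r^n * (\<Sum>i<q. r^i)" by (simp add: power_add sum_distrib_left)
    also have "(\<Sum>i<q. r^i) = (1 - r^q)/(1-r)" using r0 by (simp add: sum_gp_strict)
    also have "r^n * ((1 - r^q)/(1-r)) \<le> r^n / (1-r)" using r0
      by (simp add: divide_right_mono mult_left_le zero_le_power)
    finally show ?thesis .
  qed
  have cau2: "S (y n) (y n) (y (n+q)) \<le> a n *\<^sub>R d 0" for n q
  proof -
    have "2 * (\<Sum>i<q. r^(n+i)) \<le> a n" using sumb[of n q] unfolding a_def by simp
    hence "(2 * (\<Sum>i<q. r^(n+i))) *\<^sub>R d 0 \<le> a n *\<^sub>R d 0" using d0 by (rule scaleR_right_mono)
    thus ?thesis using cau[of n q] by (rule order_trans[rotated])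
  qed
  have dz: "dec_to_zero (\<lambda>n. a n *\<^sub>R d 0)"
  proof (rule dec_scaled[OF arch d0])
    fix n show "a (Suc n) \<le> a n" using r0 unfolding a_def
      by (auto intro!: divide_right_mono mult_left_le_one_le simp: mult_le_cancel_left1)
  next
    fix n show "0 \<le> a n" using r0 unfolding a_def by auto
  next
    fix e :: real assume "e > 0"
    then obtain n where "r^n < e * (1-r) / 2" using r0 real_arch_pow_inv[of "e*(1-r)/2" r]
      by (cases "r = 0") (auto intro: exI[of _ 1])
    thus "\<exists>n. a n < e" unfolding a_def using r0 by (auto simp: field_simps)
  qed
  have ycau: "V_Cauchy S y" unfolding V_Cauchy_def using dz cau2 by blast
  obtain l where l: "l \<in> range k" "V_converges S y l"
  proof (cases "V_complete_on S (range p)")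
    case True
    then obtain l where "l \<in> range p" "V_converges S y l"
    proof -
      have "\<forall>n. y n \<in> range p" unfolding y_def by auto
      thus ?thesis using True ycau that unfolding V_complete_on_def by blast
    qed
    thus ?thesis using that range_sub by auto
  next
    case False
    hence "V_complete_on S (range k)" using sub_complete by auto
    moreover have "y n \<in> range k" for n using kx[of n] unfolding y_def by (metis rangeI)
    ultimately obtain l where "l \<in> range k" "V_converges S y l"
      using ycau unfolding V_complete_on_def by blast
    thus ?thesis using that by auto
  qed
  obtain u where u: "k u = l" using l(1) by auto
  obtain \<mu> where mu: "dec_to_zero \<mu>" "\<And>n. S (y n) (y n) l \<le> \<mu> n"
    using l(2) unfolding V_converges_def by blast
  have mudec: "\<mu> (Suc n) \<le> \<mu> n" for n using mu(1) unfolding dec_to_zero_def by blast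
  have pu: "p u = l"
  proof -
    let ?D = "S (p u) (p u) l"
    define C where "C = 2*h1+6*h3+2*h4+2*h5+1"
    have bnd: "?D \<le> (1/(1-(2*h2+4*h4))) *\<^sub>R (C *\<^sub>R \<mu> n)" for n
    proof -
      have m1: "S (y (Suc n)) (y (Suc n)) l \<le> \<mu> n" using mu(2)[of "Suc n"] mudec[of n] by auto
      have e1: "S l l (y n) \<le> \<mu> n" using mu(2)[of n] sym[of l "y n"] by simp
      have e2: "S (y (Suc n)) (y (Suc n)) (y n) \<le> 3 *\<^sub>R \<mu> n"
      proof -
        have "S (y (Suc n)) (y (Suc n)) (y n) \<le> 2 *\<^sub>R S (y (Suc n)) (y (Suc n)) l + S l l (y n)"
          by (rule tri)
        also have "\<dots> \<le> 2 *\<^sub>R \<mu> n + \<mu> n" by (intro add_mono scaleR_left_mono m1 e1) auto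
        also have "\<dots> = 2 *\<^sub>R \<mu> n + 1 *\<^sub>R \<mu> n" by simp
        also have "\<dots> = (2+1) *\<^sub>R \<mu> n" by (rule scaleR_add_left[symmetric])
        finally show ?thesis by simp
      qed
      have e3: "S (p u) (p u) (y n) \<le> 2 *\<^sub>R ?D + \<mu> n"
        using tri[of "p u" "y n" l] add_left_mono[OF e1, of "2 *\<^sub>R ?D"] by (rule order_trans)
      have c: "S (p u) (p u) (y (Suc n)) \<le> h1 *\<^sub>R S l l (y n) + h2 *\<^sub>R ?D + h3 *\<^sub>R S (y (Suc n)) (y (Suc n)) (y n)
          + h4 *\<^sub>R S (p u) (p u) (y n) + h5 *\<^sub>R S (y (Suc n)) (y (Suc n)) l"
        using contr[of u "x (Suc n)"] kx[of n] u unfolding y_def by simp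
      also have "\<dots> \<le> h1 *\<^sub>R \<mu> n + h2 *\<^sub>R ?D + h3 *\<^sub>R (3 *\<^sub>R \<mu> n) + h4 *\<^sub>R (2 *\<^sub>R ?D + \<mu> n) + h5 *\<^sub>R \<mu> n"
        using hpos by (intro add_mono scaleR_left_mono e1 e2 e3 m1 order_refl) auto
      finally have c2: "S (p u) (p u) (y (Suc n)) \<le> h1 *\<^sub>R \<mu> n + h2 *\<^sub>R ?D + h3 *\<^sub>R (3 *\<^sub>R \<mu> n) + h4 *\<^sub>R (2 *\<^sub>R ?D + \<mu> n) + h5 *\<^sub>R \<mu> n" .
      have "?D \<le> 2 *\<^sub>R S (p u) (p u) (y (Suc n)) + S (y (Suc n)) (y (Suc n)) l" by (rule tri)
      also have "\<dots> \<le> 2 *\<^sub>R (h1 *\<^sub>R \<mu> n + h2 *\<^sub>R ?D + h3 *\<^sub>R (3 *\<^sub>R \<mu> n) + h4 *\<^sub>R (2 *\<^sub>R ?D + \<mu> n) + h5 *\<^sub>R \<mu> n) + \<mu> n"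
        by (intro add_mono scaleR_left_mono c2 m1) auto
      also have "\<dots> = (2*h2+4*h4) *\<^sub>R ?D + C *\<^sub>R \<mu> n"
        unfolding C_def by (simp add: algebra_simps)
      finally show ?thesis using hpos hsum by (intro absorb) auto
    qed
    have "?D \<le> 0"
      using below_dec[OF mu(1), of "C/(1-(2*h2+4*h4))" ?D] bnd hpos hsum unfolding C_def by auto
    hence "?D = 0" using nn[of "p u" "p u" l] by simp
    thus ?thesis using zero by simp
  qed
  have coinc: "p u = k u" using pu u by simp
  have part1: "\<exists>!y. point_of_coincidence p k y"
  proof
    show "point_of_coincidence p k (p u)" unfolding point_of_coincidence_def using coinc by metis
  next
    fix z assume "point_of_coincidence p k z"
    then obtain a where "p a = z" "k a = z" unfolding point_of_coincidence_def by blast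
    thus "z = p u" using uniq[of a u] coinc by simp
  qed
  have part2: "\<exists>!z. p z = z \<and> k z = z" if wc: "weakly_compatible p k"
  proof
    let ?w = "p u"
    have "p ?w = k ?w" using wc coinc unfolding weakly_compatible_def by metis
    hence pw: "p ?w = ?w" using uniq[of u ?w] coinc by simp
    thus "p ?w = ?w \<and> k ?w = ?w" using \<open>p ?w = k ?w\<close> by simp
    fix z assume "p z = z \<and> k z = z"
    thus "z = ?w" using uniq[of z u] coinc by simp
  qed
  show ?thesis using part1 part2 by blast
qed

end
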